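(* Let $a,b\ge1$, $P=[a]\times[b]$, fix an integer $k$ with $1-a\le k\le b-1$, and let $B=\{(i,j)\in P\colon j-i=k\}$. Then $\sum_{p\in B}\mathbb{1}_p\equiv c$, where $c=a(b-k)/(a+b)$ if $k\ge0$ and $c=b(a+k)/(a+b)$ if $k<0$.
   Context: $[a]\times[b]=\{(i,j)\colon 1\le i\le a,\ 1\le j\le b\}$ with $(i,j)\le(i',j')$ iff $i\le i'$ and $j\le j'$. $\mathcal{J}(P)$ is the set of order ideals of $P$. For $x\in P$, $I\in\mathcal{J}(P)$: $\mathbb{1}_x(I)=1$ if $x\in I$, else $0$; $T_x^+(I)=1$ if $x$ is a minimal element of $P\setminus I$, else $0$; $T_x^-(I)=1$ if $x$ is a maximal element of $I$, else $0$; $T_x=T_x^+-T_x^-$. For statistics $f,g\colon\mathcal{J}(P)\to\mathbb{R}$, $f\equiv g$ means there exist real constants $c_x$ ($x\in P$) with $f-g=\sum_{x\in P}c_xT_x$; a real number $c$ denotes the constant function $c$. *)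

theory Defs
  imports Complex_Main
begin

definition order_ideals :: "'a set \<Rightarrow> ('a \<Rightarrow> 'a \<Rightarrow> bool) \<Rightarrow> 'a set set" where
  "order_ideals P le = {I. I \<subseteq> P \<and> (\<forall>x\<in>I. \<forall>y\<in>P. le y x \<longrightarrow> y \<in> I)}"

definition ind :: "'a \<Rightarrow> 'a set \<Rightarrow> real" where
  "ind x I = (if x \<in> I then 1 else 0)"

definition T_plus :: "'a set \<Rightarrow> ('a \<Rightarrow> 'a \<Rightarrow> bool) \<Rightarrow> 'a \<Rightarrow> 'a set \<Rightarrow> real" where
  "T_plus P le x I = (if x \<in> P - I \<and> (\<forall>y\<in>P - I. le y x \<longrightarrow> y = x) then 1 else 0)"

definition T_minus :: "'a set \<Rightarrow> ('a \<Rightarrow> 'a \<Rightarrow> bool) \<Rightarrow> 'a \<Rightarrow> 'a set \<Rightarrow> real" where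
  "T_minus P le x I = (if x \<in> I \<and> (\<forall>y\<in>I. le x y \<longrightarrow> y = x) then 1 else 0)"

definition toggle :: "'a set \<Rightarrow> ('a \<Rightarrow> 'a \<Rightarrow> bool) \<Rightarrow> 'a \<Rightarrow> 'a set \<Rightarrow> real" where
  "toggle P le x I = T_plus P le x I - T_minus P le x I"

definition stat_equiv :: "'a set \<Rightarrow> ('a \<Rightarrow> 'a \<Rightarrow> bool) \<Rightarrow> ('a set \<Rightarrow> real) \<Rightarrow> ('a set \<Rightarrow> real) \<Rightarrow> bool" where
  "stat_equiv P le f g \<longleftrightarrow>
     (\<exists>c :: 'a \<Rightarrow> real. \<forall>I \<in> order_ideals P le. f I - g I = (\<Sum>x\<in>P. c x * toggle P le x I))"

definition rect :: "nat \<Rightarrow> nat \<Rightarrow> (nat \<times> nat) set" where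
  "rect a b = {(i, j). 1 \<le> i \<and> i \<le> a \<and> 1 \<le> j \<and> j \<le> b}"

definition rect_le :: "nat \<times> nat \<Rightarrow> nat \<times> nat \<Rightarrow> bool" where
  "rect_le p q \<longleftrightarrow> fst p \<le> fst q \<and> snd p \<le> snd q"

end

theory Submission imports Defs begin

definition tg :: "(nat\<times>nat) set \<Rightarrow> nat\<times>nat \<Rightarrow> real" where
"tg I y = (if y \<notin> I \<and> (fst y = 1 \<or> (fst y - 1, snd y) \<in> I) \<and> (snd y = 1 \<or> (fst y, snd y - 1) \<in> I) then 1 else 0)
   - (if y \<in> I \<and> (Suc (fst y), snd y) \<notin> I \<and> (fst y, Suc (snd y)) \<notin> I then 1 else 0)"

lemma ideal_down:
  assumes "I \<in> order_ideals (rect a b) rect_le" "x \<in> I" "fst y \<le> fst x" "snd y \<le> snd x" "1 \<le> fst y" "1 \<le> snd y"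
  shows "y \<in> I"
proof -
  have "I \<subseteq> rect a b" using assms(1) by (simp add: order_ideals_def)
  then have "x \<in> rect a b" using assms(2) by auto
  then have "y \<in> rect a b" using assms(3-6) by (auto simp: rect_def)
  then show ?thesis using assms unfolding order_ideals_def rect_le_def by auto
qed

lemma ideal_sub: "I \<in> order_ideals (rect a b) rect_le \<Longrightarrow> I \<subseteq> rect a b"
  by (simp add: order_ideals_def)

lemma toggle_tg:
  assumes I: "I \<in> order_ideals (rect a b) rect_le" and y: "y \<in> rect a b"
  shows "toggle (rect a b) rect_le y I = tg I y"
proof -
  obtain p q where yy: "y = (p,q)" by force
  have sub: "I \<subseteq> rect a b" using I by (rule ideal_sub)
  have py: "1 \<le> p" "p \<le> a" "1 \<le> q" "q \<le> b" using y yy by (auto simp: rect_def)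
  have plus: "(y \<in> rect a b - I \<and> (\<forall>z\<in>rect a b - I. rect_le z y \<longrightarrow> z = y)) \<longleftrightarrow>
     (y \<notin> I \<and> (fst y = 1 \<or> (fst y - 1, snd y) \<in> I) \<and> (snd y = 1 \<or> (fst y, snd y - 1) \<in> I))"
  proof
    assume h: "y \<in> rect a b - I \<and> (\<forall>z\<in>rect a b - I. rect_le z y \<longrightarrow> z = y)"
    have "p = 1 \<or> (p - 1, q) \<in> I"
    proof (rule ccontr)
      assume "\<not> (p = 1 \<or> (p - 1, q) \<in> I)"
      then have "(p-1,q) \<in> rect a b - I" "rect_le (p-1,q) y" "(p-1,q) \<noteq> y" using py yy by (auto simp: rect_def rect_le_def)
      then show False using h by blast
    qed
    moreover have "q = 1 \<or> (p, q - 1) \<in> I"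
    proof (rule ccontr)
      assume "\<not> (q = 1 \<or> (p, q - 1) \<in> I)"
      then have "(p,q-1) \<in> rect a b - I" "rect_le (p,q-1) y" "(p,q-1) \<noteq> y" using py yy by (auto simp: rect_def rect_le_def)
      then show False using h by blast
    qed
    ultimately show "y \<notin> I \<and> (fst y = 1 \<or> (fst y - 1, snd y) \<in> I) \<and> (snd y = 1 \<or> (fst y, snd y - 1) \<in> I)"
      using h yy by auto
  next
    assume h: "y \<notin> I \<and> (fst y = 1 \<or> (fst y - 1, snd y) \<in> I) \<and> (snd y = 1 \<or> (fst y, snd y - 1) \<in> I)"
    have "z = y" if z: "z \<in> rect a b - I" "rect_le z y" for z
    proof (rule ccontr)
      assume ne: "z \<noteq> y"
      obtain u v where zz: "z = (u,v)" by force
      have uv: "1 \<le> u" "1 \<le> v" "u \<le> p" "v \<le> q" using z zz yy by (auto simp: rect_def rect_le_def)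
      have "u < p \<or> v < q" using ne uv zz yy by auto
      then show False
      proof
        assume "u < p"
        then have "(p-1,q) \<in> I" using h yy uv by auto
        then have "z \<in> I" using ideal_down[OF I, of "(p-1,q)" z] zz uv \<open>u<p\<close> by auto
        then show False using z by auto
      next
        assume "v < q"
        then have "(p,q-1) \<in> I" using h yy uv by auto
        then have "z \<in> I" using ideal_down[OF I, of "(p,q-1)" z] zz uv \<open>v<q\<close> by auto
        then show False using z by auto
      qed
    qed
    then show "y \<in> rect a b - I \<and> (\<forall>z\<in>rect a b - I. rect_le z y \<longrightarrow> z = y)" using h y by auto
  qed
  have minus: "(y \<in> I \<and> (\<forall>z\<in>I. rect_le y z \<longrightarrow> z = y)) \<longleftrightarrow>
     (y \<in> I \<and> (Suc (fst y), snd y) \<notin> I \<and> (fst y, Suc (snd y)) \<notin> I)"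
  proof
    assume h: "y \<in> I \<and> (\<forall>z\<in>I. rect_le y z \<longrightarrow> z = y)"
    then show "y \<in> I \<and> (Suc (fst y), snd y) \<notin> I \<and> (fst y, Suc (snd y)) \<notin> I"
      using yy by (auto simp: rect_le_def)
  next
    assume h: "y \<in> I \<and> (Suc (fst y), snd y) \<notin> I \<and> (fst y, Suc (snd y)) \<notin> I"
    have "z = y" if z: "z \<in> I" "rect_le y z" for z
    proof (rule ccontr)
      assume ne: "z \<noteq> y"
      obtain u v where zz: "z = (u,v)" by force
      have uv: "p \<le> u" "q \<le> v" using z zz yy by (auto simp: rect_def rect_le_def)
      have "p < u \<or> q < v" using ne uv zz yy by auto
      then show False
      proof
        assume "p < u"
        then have "(Suc p, q) \<in> I" using ideal_down[OF I z(1), of "(Suc p, q)"] zz uv py by auto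
        then show False using h yy by auto
      next
        assume "q < v"
        then have "(p, Suc q) \<in> I" using ideal_down[OF I z(1), of "(p, Suc q)"] zz uv py by auto
        then show False using h yy by auto
      qed
    qed
    then show "y \<in> I \<and> (\<forall>z\<in>I. rect_le y z \<longrightarrow> z = y)" using h by auto
  qed
  show ?thesis unfolding toggle_def T_plus_def T_minus_def tg_def using plus minus by simp
qed

definition gg :: "nat \<Rightarrow> nat \<Rightarrow> int \<Rightarrow> int \<Rightarrow> real" where
"gg a b k d = - ((real_of_int (min d k) + real a) * (real b - real_of_int (max d k))) / (real a + real b)"

lemma aux3: "(s::real) \<noteq> 0 \<Longrightarrow> -X/s - 2*(-Y/s) + -Z/s = (-X + 2*Y - Z)/s"
  by (simp add: field_simps)

lemma gg_diff: assumes "1 \<le> a" shows "gg a b k (d-1) - 2 * gg a b k d + gg a b k (d+1) = (if d = k then 1 else 0)"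
proof -
  have pos: "real a + real b \<noteq> 0" using assms by simp
  have e: "gg a b k (d-1) - 2 * gg a b k d + gg a b k (d+1) =
    (- ((real_of_int (min (d-1) k) + real a) * (real b - real_of_int (max (d-1) k)))
     + 2 * ((real_of_int (min d k) + real a) * (real b - real_of_int (max d k)))
     - ((real_of_int (min (d+1) k) + real a) * (real b - real_of_int (max (d+1) k)))) / (real a + real b)"
    unfolding gg_def using aux3[OF pos] by (simp only: minus_divide_left)
  consider "d < k" | "d = k" | "d > k" by linarith
  then show ?thesis
  proof cases
    case 1
    then have "min (d-1) k = d-1" "min d k = d" "min (d+1) k = d+1" "max (d-1) k = k" "max d k = k" "max (d+1) k = k" by auto
    then show ?thesis using 1 pos unfolding e by (simp add: algebra_simps)
  next
    case 2
    then have "min (d-1) k = d-1" "min d k = k" "min (d+1) k = k" "max (d-1) k = k" "max d k = k" "max (d+1) k = d+1" by auto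
    then show ?thesis using 2 pos unfolding e by (simp add: algebra_simps)
  next
    case 3
    then have "min (d-1) k = k" "min d k = k" "min (d+1) k = k" "max (d-1) k = d-1" "max d k = d" "max (d+1) k = d+1" by auto
    then show ?thesis using 3 pos unfolding e by (simp add: algebra_simps)
  qed
qed

definition cnt :: "nat \<times> nat \<Rightarrow> int" where "cnt y = int (snd y) - int (fst y)"

lemma tg_local:
  assumes sub: "I0 \<subseteq> rect a b" and x: "(i,j) \<in> rect a b" and nx: "(i,j) \<notin> I0"
    and l1: "2 \<le> i \<Longrightarrow> (i-1,j) \<in> I0" and l2: "2 \<le> j \<Longrightarrow> (i,j-1) \<in> I0"
    and u1: "(Suc i, j) \<notin> I0" and u2: "(i, Suc j) \<notin> I0"
    and y: "y \<in> rect a b"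
  shows "tg (insert (i,j) I0) y - tg I0 y =
     (if y = (i,j) then -2 else 0)
   + (if y = (i-1,j) then (if (i-1,Suc j) \<in> I0 then 0 else 1) else 0)
   + (if y = (i,Suc j) then (if i = 1 \<or> (i-1,Suc j) \<in> I0 then 1 else 0) else 0)
   + (if y = (i,j-1) then (if (Suc i,j-1) \<in> I0 then 0 else 1) else 0)
   + (if y = (Suc i,j) then (if j = 1 \<or> (Suc i,j-1) \<in> I0 then 1 else 0) else 0)"
proof -
  have ij: "1 \<le> i" "i \<le> a" "1 \<le> j" "j \<le> b" using x by (auto simp: rect_def)
  have ne: "i - 1 \<noteq> i" "j-1 \<noteq> j" "i - 1 \<noteq> Suc i" "j - 1 \<noteq> Suc j" "Suc i \<noteq> i" "Suc j \<noteq> j" using ij by auto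
  have l1': "i = 1 \<or> (i-1,j) \<in> I0" using l1 ij by (cases "i = 1") auto
  have l2': "j = 1 \<or> (i,j-1) \<in> I0" using l2 ij by (cases "j = 1") auto
  consider "y = (i,j)" | "y = (i-1,j)" | "y = (i,Suc j)" | "y = (i,j-1)" | "y = (Suc i,j)"
    | "y \<noteq> (i,j)" "y \<noteq> (i-1,j)" "y \<noteq> (i,Suc j)" "y \<noteq> (i,j-1)" "y \<noteq> (Suc i,j)" by blast
  then show ?thesis
  proof cases
    case 1
    show ?thesis unfolding 1 using ij nx u1 u2 ne l1' l2' by (simp add: tg_def)
  next
    case 2
    have i2: "2 \<le> i" using y 2 by (simp add: rect_def, arith)
    have "(i-1,j) \<in> I0" using l1 i2 by simp
    then show ?thesis unfolding 2 using ij nx u1 u2 ne i2 by (simp add: tg_def)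
  next
    case 3
    show ?thesis unfolding 3 using ij nx u1 u2 ne by (simp add: tg_def)
  next
    case 4
    have j2: "2 \<le> j" using y 4 by (simp add: rect_def, arith)
    have "(i,j-1) \<in> I0" using l2 j2 by simp
    then show ?thesis unfolding 4 using ij nx u1 u2 ne j2 by (simp add: tg_def)
  next
    case 5
    show ?thesis unfolding 5 using ij nx u1 u2 ne by (simp add: tg_def)
  next
    case 6
    obtain p q where yy: "y = (p,q)" by force
    have py: "1 \<le> p" "1 \<le> q" using y yy by (auto simp: rect_def)
    have n: "(p,q) \<noteq> (i,j)" "(p,q) \<noteq> (i-1,j)" "(p,q) \<noteq> (i,Suc j)" "(p,q) \<noteq> (i,j-1)" "(p,q) \<noteq> (Suc i,j)"
      using 6 unfolding yy by simp_all
    have m0: "(p,q) \<in> insert (i,j) I0 \<longleftrightarrow> (p,q) \<in> I0" using n(1) by blast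
    have "(p-1,q) \<noteq> (i,j)" using n(5) py by (cases p) auto
    then have m1: "(p-1,q) \<in> insert (i,j) I0 \<longleftrightarrow> (p-1,q) \<in> I0" by blast
    have "(p,q-1) \<noteq> (i,j)" using n(3) py by (cases q) auto
    then have m2: "(p,q-1) \<in> insert (i,j) I0 \<longleftrightarrow> (p,q-1) \<in> I0" by blast
    have "(Suc p,q) \<noteq> (i,j)" using n(2) by auto
    then have m3: "(Suc p,q) \<in> insert (i,j) I0 \<longleftrightarrow> (Suc p,q) \<in> I0" by blast
    have "(p,Suc q) \<noteq> (i,j)" using n(4) by auto
    then have m4: "(p,Suc q) \<in> insert (i,j) I0 \<longleftrightarrow> (p,Suc q) \<in> I0" by blast
    show ?thesis using 6 unfolding yy tg_def fst_conv snd_conv m0 m1 m2 m3 m4 by (simp only: if_False add_0_right diff_self prod.inject)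
  qed
qed


lemma mult_if_eq: "(r::real) * (if P then v else 0) = (if P then r * v else 0)"
  by simp

lemma finite_rect: "finite (rect a b)"
proof -
  have "rect a b \<subseteq> {1..a} \<times> {1..b}" by (auto simp: rect_def)
  then show ?thesis by (rule finite_subset) simp
qed

lemma gg_b: "k \<le> int b \<Longrightarrow> gg a b k (int b) = 0"
  by (simp add: gg_def)

lemma gg_a: "- int a \<le> k \<Longrightarrow> gg a b k (- int a) = 0"
  by (simp add: gg_def)

lemma F_step:
  assumes a1: "1 \<le> a" and k1: "- int a \<le> k" and k2: "k \<le> int b"
    and sub: "I0 \<subseteq> rect a b" and x: "(i,j) \<in> rect a b" and nx: "(i,j) \<notin> I0"
    and l1: "2 \<le> i \<Longrightarrow> (i-1,j) \<in> I0" and l2: "2 \<le> j \<Longrightarrow> (i,j-1) \<in> I0"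
    and u1: "(Suc i, j) \<notin> I0" and u2: "(i, Suc j) \<notin> I0"
  shows "(\<Sum>y\<in>rect a b. gg a b k (cnt y) * tg (insert (i,j) I0) y)
       = (\<Sum>y\<in>rect a b. gg a b k (cnt y) * tg I0 y) + (if cnt (i,j) = k then 1 else 0)"
proof -
  let ?P = "rect a b"
  let ?g = "\<lambda>y. gg a b k (cnt y)"
  define v1 :: real where "v1 = (if (i-1,Suc j) \<in> I0 then 0 else 1)"
  define v2 :: real where "v2 = (if i = 1 \<or> (i-1,Suc j) \<in> I0 then 1 else 0)"
  define v3 :: real where "v3 = (if (Suc i,j-1) \<in> I0 then 0 else 1)"
  define v4 :: real where "v4 = (if j = 1 \<or> (Suc i,j-1) \<in> I0 then 1 else 0)"
  have ij: "1 \<le> i" "i \<le> a" "1 \<le> j" "j \<le> b" using x by (auto simp: rect_def)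
  have "(\<Sum>y\<in>?P. ?g y * tg (insert (i,j) I0) y) - (\<Sum>y\<in>?P. ?g y * tg I0 y)
      = (\<Sum>y\<in>?P. ?g y * (tg (insert (i,j) I0) y - tg I0 y))"
    by (simp add: sum_subtractf[symmetric] right_diff_distrib)
  also have "\<dots> = (\<Sum>y\<in>?P. (if y = (i,j) then ?g y * -2 else 0)
      + (if y = (i-1,j) then ?g y * v1 else 0)
      + (if y = (i,Suc j) then ?g y * v2 else 0)
      + (if y = (i,j-1) then ?g y * v3 else 0)
      + (if y = (Suc i,j) then ?g y * v4 else 0))"
  proof (rule sum.cong)
    fix y assume y: "y \<in> ?P"
    have eq: "tg (insert (i,j) I0) y - tg I0 y = (if y = (i,j) then -2 else 0)
      + (if y = (i-1,j) then v1 else 0)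
      + (if y = (i,Suc j) then v2 else 0)
      + (if y = (i,j-1) then v3 else 0)
      + (if y = (Suc i,j) then v4 else 0)"
      unfolding v1_def v2_def v3_def v4_def by (rule tg_local[OF sub x nx l1 l2 u1 u2 y])
    show "?g y * (tg (insert (i,j) I0) y - tg I0 y) = (if y = (i,j) then ?g y * -2 else 0)
      + (if y = (i-1,j) then ?g y * v1 else 0)
      + (if y = (i,Suc j) then ?g y * v2 else 0)
      + (if y = (i,j-1) then ?g y * v3 else 0)
      + (if y = (Suc i,j) then ?g y * v4 else 0)"
      unfolding eq by (simp only: distrib_left mult_if_eq)
  qed simp
  also have "\<dots> = ?g (i,j) * -2
      + (if (i-1,j) \<in> ?P then ?g (i-1,j) * v1 else 0)
      + (if (i,Suc j) \<in> ?P then ?g (i,Suc j) * v2 else 0)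
      + (if (i,j-1) \<in> ?P then ?g (i,j-1) * v3 else 0)
      + (if (Suc i,j) \<in> ?P then ?g (Suc i,j) * v4 else 0)"
    using x by (simp only: sum.distrib sum.delta[OF finite_rect] if_True)
  also have "\<dots> = (if cnt (i,j) = k then 1 else 0)"
  proof -
    define d where "d = cnt (i,j)"
    have c1: "i \<ge> 2 \<Longrightarrow> cnt (i-1,j) = d+1" "cnt (i, Suc j) = d + 1" "j \<ge> 2 \<Longrightarrow> cnt (i,j-1) = d - 1"
      "cnt (Suc i, j) = d - 1" unfolding d_def cnt_def by auto
    have p1: "(i-1,j) \<in> ?P \<longleftrightarrow> i \<ge> 2" "(i,Suc j) \<in> ?P \<longleftrightarrow> j < b"
      "(i,j-1) \<in> ?P \<longleftrightarrow> j \<ge> 2" "(Suc i,j) \<in> ?P \<longleftrightarrow> i < a" using ij by (auto simp: rect_def)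
    have A: "(if (i-1,j) \<in> ?P then ?g (i-1,j) * v1 else 0)
      + (if (i,Suc j) \<in> ?P then ?g (i,Suc j) * v2 else 0) = gg a b k (d+1)"
    proof (cases "i = 1")
      case True
      then show ?thesis
      proof (cases "j < b")
        case True
        then show ?thesis using \<open>i = 1\<close> p1 c1 by (simp add: v2_def)
      next
        case False
        then have "j = b" using ij by simp
        then have "d + 1 = int b" using \<open>i = 1\<close> unfolding d_def cnt_def by simp
        then show ?thesis using \<open>i = 1\<close> False p1 gg_b[OF k2] by simp
      qed
    next
      case False
      then have i2: "i \<ge> 2" using ij by simp
      show ?thesis
      proof (cases "j < b")
        case True
        then show ?thesis using i2 p1 c1 by (simp add: v1_def v2_def)
      next
        case False
        then have "j = b" using ij by simp
        have "(i-1,Suc j) \<notin> I0" using sub \<open>j = b\<close> by (auto simp: rect_def)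
        then show ?thesis using i2 False p1 c1 by (simp add: v1_def)
      qed
    qed
    have B: "(if (i,j-1) \<in> ?P then ?g (i,j-1) * v3 else 0)
      + (if (Suc i,j) \<in> ?P then ?g (Suc i,j) * v4 else 0) = gg a b k (d-1)"
    proof (cases "j = 1")
      case True
      then show ?thesis
      proof (cases "i < a")
        case True
        then show ?thesis using \<open>j = 1\<close> p1 c1 by (simp add: v4_def)
      next
        case False
        then have "i = a" using ij by simp
        then have "d - 1 = - int a" using \<open>j = 1\<close> unfolding d_def cnt_def by simp
        then show ?thesis using \<open>j = 1\<close> False p1 gg_a[OF k1] by simp
      qed
    next
      case False
      then have j2: "j \<ge> 2" using ij by simp
      show ?thesis
      proof (cases "i < a")
        case True
        then show ?thesis using j2 p1 c1 by (simp add: v3_def v4_def)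
      next
        case False
        then have "i = a" using ij by simp
        have "(Suc i,j-1) \<notin> I0" using sub \<open>i = a\<close> by (auto simp: rect_def)
        then show ?thesis using j2 False p1 c1 by (simp add: v3_def)
      qed
    qed
    have "?g (i,j) * -2 + (if (i-1,j) \<in> ?P then ?g (i-1,j) * v1 else 0)
      + (if (i,Suc j) \<in> ?P then ?g (i,Suc j) * v2 else 0)
      + (if (i,j-1) \<in> ?P then ?g (i,j-1) * v3 else 0)
      + (if (Suc i,j) \<in> ?P then ?g (Suc i,j) * v4 else 0)
      = gg a b k (d-1) - 2 * gg a b k d + gg a b k (d+1)"
      using A B unfolding d_def by linarith
    also have "\<dots> = (if d = k then 1 else 0)" by (rule gg_diff[OF a1])
    finally show ?thesis unfolding d_def .
  qed
  finally show ?thesis by linarith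
qed


lemma D_step:
  assumes x: "(i,j) \<in> rect a b" and nx: "(i,j) \<notin> I0"
  shows "(\<Sum>p\<in>{(i, j) \<in> rect a b. int j - int i = k}. ind p (insert (i,j) I0))
       = (\<Sum>p\<in>{(i, j) \<in> rect a b. int j - int i = k}. ind p I0) + (if cnt (i,j) = k then 1 else 0)"
proof -
  let ?B = "{(i, j) \<in> rect a b. int j - int i = k}"
  have fin: "finite ?B" by (rule finite_subset[OF _ finite_rect[of a b]]) auto
  have "(\<Sum>p\<in>?B. ind p (insert (i,j) I0)) = (\<Sum>p\<in>?B. ind p I0 + (if p = (i,j) then 1 else 0))"
    by (rule sum.cong) (auto simp: ind_def nx)
  also have "\<dots> = (\<Sum>p\<in>?B. ind p I0) + (if (i,j) \<in> ?B then 1 else 0)"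
    by (simp only: sum.distrib sum.delta[OF fin])
  also have "(if (i,j) \<in> ?B then 1 else 0) = (if cnt (i,j) = k then 1 else (0::real))"
    using x by (simp add: cnt_def)
  finally show ?thesis .
qed

lemma F_empty:
  shows "(\<Sum>y\<in>rect a b. gg a b k (cnt y) * tg {} y) = (if 1 \<le> a \<and> 1 \<le> b then gg a b k 0 else 0)"
proof -
  have "(\<Sum>y\<in>rect a b. gg a b k (cnt y) * tg {} y) = (\<Sum>y\<in>rect a b. if y = (1,1) then gg a b k (cnt y) else 0)"
    by (rule sum.cong) (auto simp: tg_def rect_def)
  also have "\<dots> = (if (1,1) \<in> rect a b then gg a b k (cnt (1,1)) else 0)"
    by (simp only: sum.delta[OF finite_rect])
  finally show ?thesis by (simp add: rect_def cnt_def)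
qed

theorem theorem3p10:
  fixes a b :: nat and k :: int
  assumes "1 \<le> a" and "1 \<le> b" and "1 - int a \<le> k" and "k \<le> int b - 1"
  shows "stat_equiv (rect a b) rect_le
           (\<lambda>I. \<Sum>p\<in>{(i, j) \<in> rect a b. int j - int i = k}. ind p I)
           (\<lambda>I. if k \<ge> 0 then real a * (real b - of_int k) / (real a + real b)
                else real b * (real a + of_int k) / (real a + real b))"
proof -
  let ?P = "rect a b"
  let ?D = "\<lambda>I. \<Sum>p\<in>{(i, j) \<in> rect a b. int j - int i = k}. ind p I"
  let ?c = "if k \<ge> 0 then real a * (real b - of_int k) / (real a + real b)
                else real b * (real a + of_int k) / (real a + real b)"
  let ?F = "\<lambda>I. \<Sum>y\<in>rect a b. gg a b k (cnt y) * tg I y"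
  have k1: "- int a \<le> k" and k2: "k \<le> int b" using assms by auto
  have g0: "gg a b k 0 = - ?c" by (simp add: gg_def)
  have main: "\<forall>I. I \<in> order_ideals ?P rect_le \<longrightarrow> card I = n \<longrightarrow> ?F I = ?D I - ?c" for n
  proof (induction n)
    case 0
    show ?case
    proof (intro allI impI)
      fix I assume I: "I \<in> order_ideals ?P rect_le" and c: "card I = 0"
      have "finite I" using ideal_sub[OF I] finite_rect finite_subset by blast
      then have "I = {}" using c by simp
      then show "?F I = ?D I - ?c" using F_empty[of a b k] assms g0 by (simp add: ind_def)
    qed
  next
    case (Suc n)
    show ?case
    proof (intro allI impI)
      fix I assume I: "I \<in> order_ideals ?P rect_le" and c: "card I = Suc n"
      have sub: "I \<subseteq> ?P" by (rule ideal_sub[OF I])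
      have fin: "finite I" using sub finite_rect finite_subset by blast
      have ne: "I \<noteq> {}" using c by auto
      let ?s = "\<lambda>y::nat\<times>nat. fst y + snd y"
      have "Max (?s ` I) \<in> ?s ` I" using fin ne by simp
      then obtain x where xI: "x \<in> I" and xm: "?s x = Max (?s ` I)" by auto
      have xmax: "?s y \<le> ?s x" if "y \<in> I" for y using fin that xm by simp
      obtain i j where xx: "x = (i,j)" by force
      define I0 where "I0 = I - {x}"
      have I0sub: "I0 \<subseteq> ?P" using sub I0_def by auto
      have I0id: "I0 \<in> order_ideals ?P rect_le"
        unfolding order_ideals_def
      proof (intro CollectI conjI ballI impI)
        show "I0 \<subseteq> ?P" by (rule I0sub)
        fix z y assume z: "z \<in> I0" and y: "y \<in> ?P" and le: "rect_le y z"
        have "y \<in> I" using I z y le unfolding order_ideals_def I0_def by auto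
        moreover have "y \<noteq> x"
        proof
          assume "y = x"
          then have "rect_le x z" "z \<noteq> x" using le z I0_def by auto
          then have "?s z > ?s x" by (auto simp: rect_le_def prod_eq_iff)
          moreover have "z \<in> I" using z I0_def by auto
          ultimately show False using xmax by fastforce
        qed
        ultimately show "y \<in> I0" using I0_def by auto
      qed
      have cI0: "card I0 = n" using c xI fin I0_def by simp
      have IH: "?F I0 = ?D I0 - ?c" using Suc.IH I0id cI0 by blast
      have Ieq: "I = insert (i,j) I0" using xI xx I0_def by auto
      have x: "(i,j) \<in> ?P" using xI xx sub by auto
      have nx: "(i,j) \<notin> I0" using xx I0_def by auto
      have ij: "1 \<le> i" "1 \<le> j" using x by (auto simp: rect_def)
      have l1: "(i-1,j) \<in> I0" if "2 \<le> i"
      proof -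
        have "(i-1,j) \<in> I" using ideal_down[OF I xI, of "(i-1,j)"] xx that ij by auto
        then show ?thesis using I0_def xx that by auto
      qed
      have l2: "(i,j-1) \<in> I0" if "2 \<le> j"
      proof -
        have "(i,j-1) \<in> I" using ideal_down[OF I xI, of "(i,j-1)"] xx that ij by auto
        then show ?thesis using I0_def xx that by auto
      qed
      have u1: "(Suc i, j) \<notin> I0" using xmax[of "(Suc i, j)"] xx I0_def by auto
      have u2: "(i, Suc j) \<notin> I0" using xmax[of "(i, Suc j)"] xx I0_def by auto
      have "?F I = ?F I0 + (if cnt (i,j) = k then 1 else 0)"
        unfolding Ieq by (rule F_step[OF assms(1) k1 k2 I0sub x nx l1 l2 u1 u2])
      moreover have "?D I = ?D I0 + (if cnt (i,j) = k then 1 else 0)"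
        unfolding Ieq by (rule D_step[OF x nx])
      ultimately show "?F I = ?D I - ?c" using IH by simp
    qed
  qed
  show ?thesis
    unfolding stat_equiv_def
  proof (intro exI ballI)
    fix I assume I: "I \<in> order_ideals ?P rect_le"
    have "(\<Sum>x\<in>?P. gg a b k (cnt x) * toggle ?P rect_le x I) = ?F I"
      by (rule sum.cong) (simp_all add: toggle_tg[OF I])
    also have "\<dots> = ?D I - ?c" using main I by blast
    finally show "?D I - ?c = (\<Sum>x\<in>?P. gg a b k (cnt x) * toggle ?P rect_le x I)" by simp
  qed
qed

end
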